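(* Fix $\alpha\in(0,1)$. In the two-sided weakly dependent Gaussian testing model described in the context, suppose $n_1\to\infty$ and $n_1/n\to p_1\in(0,1]$ as $n\to\infty$, and let $\mu_{(n_1)}=\max_{i\in\mathcal I_1}|\mu_i|$. If $\lim_{n_1\to\infty}\frac{\sqrt{2\log n_1}}{\mu_{(n_1)}}$ exists and is strictly less than $1$, then for both the two-sided adjusted Bonferroni procedure and the two-sided Sidak procedure, $\lim_{n\to\infty}AnyPwr_{BS}=1$.
   Context: $\Phi$ denotes the standard normal distribution function. Let $(\rho_{ij})_{i,j\ge1}$ be a symmetric array with $\rho_{ii}=1$ and $\rho_{ij}\in(-1,1)$ for $i\ne j$, such that for each $n$ the matrix $\Sigma_n=(\rho_{ij})_{1\le i,j\le n}$ is a valid correlation matrix. Put $\rho_m=\sup_{i\ge1}|\rho_{i,\,i+m}|$ and assume the weak dependence condition: $\gamma:=\sup_{m\ge 1}\rho_m<1$ and $\rho_m=o(1/\log m)$ as $m\to\infty$. For each $n$ one observes $(X_1,\dots,X_n)$, jointly Gaussian with $\mathbb{E}X_i=\mu_i$ (the means may depend on $n$), $\mathrm{Var}(X_i)=1$ and correlation matrix $\Sigma_n$. One tests $H_{0i}:\mu_i=0$ versus $H_{1i}:\mu_i\neq0$, $i=1,\dots,n$. Let $\mathcal I_1=\{i\le n:\mu_i\ne0\}$, $n_1=|\mathcal I_1|$. Define $c_{Bon}(m,\alpha):=\Phi^{-1}\bigl(1-\frac{-\log(1-\alpha)}{m}\bigr)$ and $c_{Sid}(m,\alpha):=\Phi^{-1}\bigl((1-\alpha)^{1/m}\bigr)$.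 The two-sided adjusted Bonferroni procedure rejects $H_{0i}$ iff $|X_i|>c_{Bon}(2n,\alpha)$; the two-sided Sidak procedure rejects $H_{0i}$ iff $|X_i|>c_{Sid}(2n,\alpha)$. For a procedure rejecting when $|X_i|>c$, $AnyPwr_{BS}=\mathbb{P}\bigl(|X_i|>c\text{ for some }i\in\mathcal I_1\bigr)$. *)

theory Defs
  imports "HOL-Probability.Probability" "HOL-Library.Landau_Symbols"
begin

definition Phi :: "real \<Rightarrow> real" where
  "Phi x = measure (density lborel std_normal_density) {..x}"

definition Phi_inv :: "real \<Rightarrow> real" where
  "Phi_inv p = (THE x. Phi x = p)"

definition c_Bon :: "real \<Rightarrow> real \<Rightarrow> real" where
  "c_Bon m \<alpha> = Phi_inv (1 - (- ln (1 - \<alpha>)) / m)"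

definition c_Sid :: "real \<Rightarrow> real \<Rightarrow> real" where
  "c_Sid m \<alpha> = Phi_inv ((1 - \<alpha>) powr (1 / m))"

definition gaussian_rv :: "'a measure \<Rightarrow> ('a \<Rightarrow> real) \<Rightarrow> real \<Rightarrow> real \<Rightarrow> bool" where
  "gaussian_rv M Y m v \<longleftrightarrow> Y \<in> borel_measurable M \<and> 0 \<le> v \<and>
     (if v = 0 then (AE \<omega> in M. Y \<omega> = m)
      else distributed M lborel Y (normal_density m (sqrt v)))"

text \<open>(X_1,...,X_n) jointly Gaussian with means mu_i, unit variances and
  correlations rho_ij: every linear combination is Gaussian with the
  corresponding mean and variance.\<close>
definition jointly_gaussian ::
  "'a measure \<Rightarrow> (nat \<Rightarrow> 'a \<Rightarrow> real) \<Rightarrow> (nat \<Rightarrow> real) \<Rightarrow> (nat \<Rightarrow> nat \<Rightarrow> real) \<Rightarrow> nat \<Rightarrow> bool" where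
  "jointly_gaussian M X mu rho n \<longleftrightarrow>
     (\<forall>a :: nat \<Rightarrow> real.
        gaussian_rv M (\<lambda>\<omega>. \<Sum>i=1..n. a i * X i \<omega>)
          (\<Sum>i=1..n. a i * mu i)
          (\<Sum>i=1..n. \<Sum>j=1..n. a i * a j * rho i j))"

definition rho_lag :: "(nat \<Rightarrow> nat \<Rightarrow> real) \<Rightarrow> nat \<Rightarrow> real" where
  "rho_lag rho m = (SUP i\<in>{1..}. \<bar>rho i (i + m)\<bar>)"

definition I1 :: "(nat \<Rightarrow> real) \<Rightarrow> nat \<Rightarrow> nat set" where
  "I1 mu n = {i \<in> {1..n}. mu i \<noteq> 0}"

definition AnyPwr :: "'a measure \<Rightarrow> (nat \<Rightarrow> 'a \<Rightarrow> real) \<Rightarrow> nat set \<Rightarrow> real \<Rightarrow> real" where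
  "AnyPwr M X I c = prob_space.prob M {\<omega> \<in> space M. \<exists>i\<in>I. \<bar>X i \<omega>\<bar> > c}"

end

theory Submission
  imports Defs "HOL-Real_Asymp.Real_Asymp"
begin


lemma nd_pt:
  fixes d mu x :: real
  assumes d: "0 \<le> d"
  shows "normal_density mu 1 x * indicator {x. d \<le> \<bar>x - mu\<bar>} x
     \<le> exp (-(d^2)/2) * (normal_density (mu+d) 1 x + normal_density (mu-d) 1 x)"
proof (cases "d \<le> \<bar>x - mu\<bar>")
  case False then show ?thesis
    by (simp add: normal_density_nonneg add_nonneg_nonneg)
next
  case True
  define y where "y = x - mu"
  have k: "exp (-(y^2)/2) \<le> exp (-(d^2)/2) * exp (-((\<bar>y\<bar>-d)^2)/2)"
  proof -
    have "-(y^2)/2 \<le> -(d^2)/2 + -((\<bar>y\<bar>-d)^2)/2"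
    proof -
      have e: "(\<bar>y\<bar>-d)^2 = y^2 - 2*d*\<bar>y\<bar> + d^2"
        by (simp add: power2_eq_square algebra_simps abs_mult_self)
      have "0 \<le> d*(\<bar>y\<bar>-d)" using True d unfolding y_def by simp
      moreover have "d*(\<bar>y\<bar>-d) = d*\<bar>y\<bar> - d^2" by (simp add: algebra_simps power2_eq_square)
      ultimately show ?thesis using e by linarith
    qed
    then show ?thesis by (simp add: exp_add[symmetric])
  qed
  have k2: "exp (-((\<bar>y\<bar>-d)^2)/2) \<le> exp (-((y-d)^2)/2) + exp (-((y+d)^2)/2)"
  proof (cases "y \<ge> 0")
    case True then show ?thesis by (simp add: add_increasing2)
  next
    case False
    then have "(\<bar>y\<bar>-d)^2 = (y+d)^2" by (simp add: power2_eq_square algebra_simps)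
    then show ?thesis by (simp add: add_increasing)
  qed
  have "normal_density mu 1 x = exp (-(y^2)/2) / sqrt (2*pi)"
    by (simp add: normal_density_def y_def)
  moreover have "normal_density (mu+d) 1 x + normal_density (mu-d) 1 x
      = (exp (-((y-d)^2)/2) + exp (-((y+d)^2)/2)) / sqrt (2*pi)"
    by (simp add: normal_density_def y_def add_divide_distrib algebra_simps)
  ultimately show ?thesis using True k k2
    apply (simp add: divide_right_mono)
    by (smt (verit) divide_right_mono exp_gt_zero mult_left_mono real_sqrt_gt_zero pi_gt_zero times_divide_eq_right)
qed

lemma nd_int1: "(\<integral>\<^sup>+x. ennreal (normal_density m 1 x) \<partial>lborel) = 1"
  by (simp add: nn_integral_eq_integral integrable_normal_density)

lemma tail_bound:
  fixes d mu :: real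
  assumes d: "0 \<le> d"
  shows "measure (density lborel (normal_density mu 1)) {x. d \<le> \<bar>x - mu\<bar>} \<le> 2 * exp (-(d^2)/2)"
proof -
  have meas: "{x. d \<le> \<bar>x - mu\<bar>} \<in> sets borel" by measurable
  have "emeasure (density lborel (normal_density mu 1)) {x. d \<le> \<bar>x - mu\<bar>}
     = (\<integral>\<^sup>+x. ennreal (normal_density mu 1 x) * indicator {x. d \<le> \<bar>x - mu\<bar>} x \<partial>lborel)"
    using meas by (simp add: emeasure_density)
  also have "\<dots> \<le> (\<integral>\<^sup>+x. ennreal (exp (-(d^2)/2)) * (ennreal (normal_density (mu+d) 1 x) + ennreal (normal_density (mu-d) 1 x)) \<partial>lborel)"
  proof (rule nn_integral_mono)
    fix x
    have "ennreal (normal_density mu 1 x) * indicator {x. d \<le> \<bar>x - mu\<bar>} x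
        = ennreal (normal_density mu 1 x * indicator {x. d \<le> \<bar>x - mu\<bar>} x)"
      by (simp add: indicator_def)
    also have "\<dots> \<le> ennreal (exp (-(d^2)/2) * (normal_density (mu+d) 1 x + normal_density (mu-d) 1 x))"
      using nd_pt[OF d] by (rule ennreal_leI)
    also have "\<dots> = ennreal (exp (-(d^2)/2)) * (ennreal (normal_density (mu+d) 1 x) + ennreal (normal_density (mu-d) 1 x))"
      by (simp add: ennreal_mult ennreal_plus[symmetric] del: ennreal_plus)
    finally show "ennreal (normal_density mu 1 x) * indicator {x. d \<le> \<bar>x - mu\<bar>} x \<le> \<dots>" .
  qed
  also have "\<dots> = ennreal (exp (-(d^2)/2)) * 2"
    by (simp add: nn_integral_cmult nn_integral_add nd_int1 one_add_one)
  also have "\<dots> = ennreal (2 * exp (-(d^2)/2))"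
    by (simp add: ennreal_mult mult.commute)
  finally show ?thesis
    by (simp add: measure_def enn2real_leI)
qed


lemma Phi_cdf: "Phi = cdf std_normal_distribution"
  by (simp add: Phi_def[abs_def] cdf_def)

lemma Phi_cont: "isCont Phi x"
proof -
  have "emeasure std_normal_distribution {x} = 0"
    by (simp add: emeasure_density)
  then have "measure std_normal_distribution {x} = 0" by (simp add: measure_def)
  then show ?thesis unfolding Phi_cdf using finite_borel_measure.isCont_cdf[OF real_distribution.finite_borel_measure_M[OF real_dist_normal_dist]] by simp
qed

lemma Phi_strict: assumes "x < y" shows "Phi x < Phi y"
proof -
  define k where "k = exp (-(x^2+y^2)/2) / sqrt (2*pi)"
  have kpos: "0 < k" by (simp add: k_def)
  have "ennreal (k * (y - x)) = (\<integral>\<^sup>+t. ennreal k * indicator {x<..y} t \<partial>lborel)"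
    using assms kpos by (simp add: nn_integral_cmult_indicator ennreal_mult)
  also have "\<dots> \<le> (\<integral>\<^sup>+t. ennreal (std_normal_density t) * indicator {x<..y} t \<partial>lborel)"
  proof (rule nn_integral_mono)
    fix t
    show "ennreal k * indicator {x<..y} t \<le> ennreal (std_normal_density t) * indicator {x<..y} t"
    proof (cases "t \<in> {x<..y}")
      case True
      then have "t^2 \<le> x^2 + y^2"
      proof (cases "t \<ge> 0")
        case c: True
        then have "t^2 \<le> y^2" using True by (intro power_mono) auto
        then show ?thesis by (simp add: add_increasing)
      next
        case c: False
        then have "(-t)^2 \<le> (-x)^2" using True by (intro power_mono) auto
        then show ?thesis by (simp add: add_increasing2)
      qed
      then have "k \<le> std_normal_density t"
        unfolding k_def std_normal_density_def by (simp add: divide_right_mono)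
      then show ?thesis using True by (simp add: ennreal_leI)
    qed simp
  qed
  also have "\<dots> = emeasure std_normal_distribution {x<..y}"
    by (simp add: emeasure_density)
  finally have le: "ennreal (k * (y - x)) \<le> emeasure std_normal_distribution {x<..y}" .
  interpret P: prob_space std_normal_distribution by (simp add: prob_space_normal_density)
  have "k * (y - x) \<le> measure std_normal_distribution {x<..y}"
    using le by (simp add: P.emeasure_eq_measure)
  moreover have "0 < k * (y - x)" using kpos assms by simp
  ultimately have "0 < measure std_normal_distribution {x<..y}" by linarith
  moreover have "Phi y - Phi x = measure std_normal_distribution {x<..y}"
    unfolding Phi_cdf using finite_borel_measure.cdf_diff_eq[OF real_distribution.finite_borel_measure_M[OF real_dist_normal_dist] assms] by simp
  ultimately show ?thesis by simp
qed

lemma Phi_top: "(Phi \<longlongrightarrow> 1) at_top"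
  unfolding Phi_cdf using real_distribution.cdf_lim_at_top_prob[OF real_dist_normal_dist] .
lemma Phi_bot: "(Phi \<longlongrightarrow> 0) at_bot"
  unfolding Phi_cdf using finite_borel_measure.cdf_lim_at_bot real_dist_normal_dist
  by (metis real_distribution.finite_borel_measure_M)

lemma Phi_inv_eq: assumes "0 < p" "p < 1" shows "Phi (Phi_inv p) = p"
proof -
  have "eventually (\<lambda>x. Phi x < p) at_bot" using order_tendstoD(2)[OF Phi_bot assms(1)] .
  then obtain a where a: "Phi a < p" by (auto simp: eventually_at_bot_linorder)
  have "eventually (\<lambda>x. Phi x > p) at_top" using order_tendstoD(1)[OF Phi_top assms(2)] .
  then obtain b where b: "Phi b > p" by (auto simp: eventually_at_top_linorder)
  have ab: "a \<le> b"
  proof (rule ccontr)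
    assume "\<not> a \<le> b"
    then have "Phi b < Phi a" using Phi_strict by simp
    then show False using a b by simp
  qed
  have "\<forall>x. a \<le> x \<and> x \<le> b \<longrightarrow> isCont Phi x" using Phi_cont by blast
  then obtain x where x: "Phi x = p"
    using IVT[of Phi a p b] a b ab by force
  have "\<exists>!x. Phi x = p"
  proof (rule ex1I[of _ x])
    show "Phi x = p" by (rule x)
    fix y assume y: "Phi y = p"
    show "y = x"
    proof (rule ccontr)
      assume "y \<noteq> x"
      then have "y < x \<or> x < y" by auto
      then show False using Phi_strict[of y x] Phi_strict[of x y] x y by auto
    qed
  qed
  then show ?thesis unfolding Phi_inv_def by (rule theI')
qed

lemma Phi_tail: assumes "0 \<le> t" shows "1 - Phi t \<le> 2 * exp (-(t^2)/2)"
proof -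
  interpret P: prob_space std_normal_distribution by (simp add: prob_space_normal_density)
  have "1 - Phi t = measure std_normal_distribution (UNIV - {..t})"
    unfolding Phi_def using P.prob_compl[of "{..t}"] by simp
  also have "\<dots> \<le> measure std_normal_distribution {x. t \<le> \<bar>x - 0\<bar>}"
    by (intro P.finite_measure_mono) auto
  also have "\<dots> \<le> 2 * exp (-(t^2)/2)" by (rule tail_bound[OF assms])
  finally show ?thesis .
qed


lemma Phi_inv_bound:
  assumes p: "0 < p" "p < 1" and d: "0 < \<delta>" "\<delta> \<le> 1 - p"
  shows "Phi_inv p < sqrt (2 * ln (4 / \<delta>))"
proof -
  define t where "t = sqrt (2 * ln (4 / \<delta>))"
  have d1: "\<delta> < 1" using d p by linarith
  have lnpos: "0 \<le> ln (4 / \<delta>)" using d d1 by simp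
  have t0: "0 \<le> t" unfolding t_def using lnpos by simp
  have t2: "t^2 = 2 * ln (4 / \<delta>)" unfolding t_def using lnpos by simp
  have "exp (-(t^2)/2) = \<delta> / 4" using t2 d by (simp add: exp_minus exp_ln)
  then have "1 - Phi t \<le> \<delta> / 2" using Phi_tail[OF t0] by simp
  also have "\<dots> < 1 - Phi (Phi_inv p)" using Phi_inv_eq[OF p] d by simp
  finally have "Phi (Phi_inv p) < Phi t" by simp
  moreover have "\<not> t < Phi_inv p" using Phi_strict[of t "Phi_inv p"] calculation by auto
  moreover have "t \<noteq> Phi_inv p" using calculation by auto
  ultimately show ?thesis unfolding t_def[symmetric] by linarith
qed

lemma c_Bon_bound:
  fixes \<alpha> :: real and n :: nat
  assumes "0 < \<alpha>" "\<alpha> < 1" "- ln (1 - \<alpha>) < 2 * real n"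
  shows "c_Bon (2 * real n) \<alpha> \<le> sqrt (2 * ln (16 * real n / (- ln (1 - \<alpha>))))"
proof -
  define \<beta> where "\<beta> = - ln (1 - \<alpha>)"
  have b: "0 < \<beta>" unfolding \<beta>_def using assms by simp
  have n: "0 < real n" using assms b unfolding \<beta>_def by linarith
  have p: "0 < 1 - \<beta> / (2 * real n)" "1 - \<beta> / (2 * real n) < 1"
    using b n assms(3) unfolding \<beta>_def[symmetric] by (auto simp: field_simps)
  have "Phi_inv (1 - \<beta> / (2 * real n)) < sqrt (2 * ln (4 / (\<beta> / (4 * real n))))"
    using b n by (intro Phi_inv_bound p) (auto simp: field_simps)
  moreover have "4 / (\<beta> / (4 * real n)) = 16 * real n / \<beta>" using b by (simp add: field_simps)
  ultimately show ?thesis unfolding c_Bon_def \<beta>_def by simp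
qed

lemma c_Sid_bound:
  fixes \<alpha> :: real and n :: nat
  assumes "0 < \<alpha>" "\<alpha> < 1" "- ln (1 - \<alpha>) < 2 * real n"
  shows "c_Sid (2 * real n) \<alpha> \<le> sqrt (2 * ln (16 * real n / (- ln (1 - \<alpha>))))"
proof -
  define \<beta> where "\<beta> = - ln (1 - \<alpha>)"
  have b: "0 < \<beta>" unfolding \<beta>_def using assms by simp
  have n: "0 < real n" using assms b unfolding \<beta>_def by linarith
  define x where "x = \<beta> / (2 * real n)"
  have x: "0 < x" "x \<le> 1" unfolding x_def using b n assms(3) unfolding \<beta>_def[symmetric] by (auto simp: field_simps)
  have pe: "(1 - \<alpha>) powr (1 / (2 * real n)) = exp (- x)"
    using assms unfolding x_def \<beta>_def powr_def by (simp add: field_simps)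
  have p: "0 < exp (-x)" "exp (-x) < 1" using x by auto
  have "1 + x \<le> exp x" by (rule exp_ge_add_one_self)
  then have "exp (-x) \<le> 1 / (1 + x)" using x by (simp add: exp_minus field_simps)
  moreover have "1 / (1 + x) \<le> 1 - x / 2"
  proof -
    have "x * x \<le> 1 * x" using x by (intro mult_right_mono) auto
    then have "1 \<le> (1 - x / 2) * (1 + x)" by (simp add: algebra_simps)
    then show ?thesis using x by (simp add: pos_divide_le_eq)
  qed
  ultimately have le: "\<beta> / (4 * real n) \<le> 1 - exp (-x)" unfolding x_def by (simp add: field_simps)
  have "Phi_inv (exp (-x)) < sqrt (2 * ln (4 / (\<beta> / (4 * real n))))"
    using b n le by (intro Phi_inv_bound p) (auto simp: field_simps)
  moreover have "4 / (\<beta> / (4 * real n)) = 16 * real n / \<beta>" using b by (simp add: field_simps)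
  ultimately show ?thesis unfolding c_Sid_def pe[unfolded \<beta>_def] \<beta>_def by simp
qed

lemma marginal:
  assumes jg: "jointly_gaussian M X mu rho n" and i: "i \<in> {1..n}" and r: "rho i i = 1"
  shows "distributed M lborel (X i) (\<lambda>x. ennreal (normal_density (mu i) 1 x))"
        "X i \<in> borel_measurable M"
proof -
  define a where "a = (\<lambda>j. if j = i then 1 else 0 :: real)"
  have g: "gaussian_rv M (\<lambda>\<omega>. \<Sum>j=1..n. a j * X j \<omega>) (\<Sum>j=1..n. a j * mu j)
          (\<Sum>j=1..n. \<Sum>k=1..n. a j * a k * rho j k)"
    using jg unfolding jointly_gaussian_def by blast
  have sd: "(\<Sum>j=1..n. a j * f j) = f i" for f :: "nat \<Rightarrow> real"
  proof -
    have "(\<Sum>j=1..n. a j * f j) = (\<Sum>j\<in>{1..n}. if j = i then f j else 0)"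
      by (rule sum.cong) (auto simp: a_def)
    also have "\<dots> = f i" using i by (simp add: sum.delta)
    finally show ?thesis .
  qed
  have e1: "(\<lambda>\<omega>. \<Sum>j=1..n. a j * X j \<omega>) = X i"
    by (rule ext) (rule sd)
  have e2: "(\<Sum>j=1..n. a j * mu j) = mu i" by (rule sd)
  have e3: "(\<Sum>j=1..n. \<Sum>k=1..n. a j * a k * rho j k) = 1"
  proof -
    have "(\<Sum>j=1..n. \<Sum>k=1..n. a j * a k * rho j k) = (\<Sum>j=1..n. a j * (\<Sum>k=1..n. a k * rho j k))"
      by (simp add: sum_distrib_left mult.assoc)
    also have "\<dots> = (\<Sum>k=1..n. a k * rho i k)" by (rule sd)
    also have "\<dots> = rho i i" by (rule sd)
    finally show ?thesis using r by simp
  qed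
  from g show "distributed M lborel (X i) (\<lambda>x. ennreal (normal_density (mu i) 1 x))"
              "X i \<in> borel_measurable M"
    unfolding e1 e2 e3 gaussian_rv_def by auto
qed

lemma power_bound:
  assumes P: "prob_space M" and D: "distributed M lborel Y (\<lambda>x. ennreal (normal_density m 1 x))"
    and ct: "c \<le> t" and tm: "t \<le> \<bar>m\<bar>"
  shows "1 - 2 * exp (-((\<bar>m\<bar> - t)^2)/2) \<le> prob_space.prob M {\<omega> \<in> space M. c < \<bar>Y \<omega>\<bar>}"
proof -
  interpret prob_space M by (rule P)
  have Ym: "Y \<in> borel_measurable M" using distributed_measurable[OF D] by simp
  have S: "{x. \<bar>m\<bar> - t \<le> \<bar>x - m\<bar>} \<in> sets borel" by measurable
  have "prob {\<omega> \<in> space M. \<bar>Y \<omega>\<bar> \<le> t} \<le> prob (Y -` {x. \<bar>m\<bar> - t \<le> \<bar>x - m\<bar>} \<inter> space M)"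
    using Ym by (intro finite_measure_mono) (auto, measurable)
  also have "\<dots> = measure (distr M lborel Y) {x. \<bar>m\<bar> - t \<le> \<bar>x - m\<bar>}"
    using Ym S by (simp add: measure_distr)
  also have "\<dots> = measure (density lborel (normal_density m 1)) {x. \<bar>m\<bar> - t \<le> \<bar>x - m\<bar>}"
    using distributed_distr_eq_density[OF D] by simp
  also have "\<dots> \<le> 2 * exp (-((\<bar>m\<bar> - t)^2)/2)" using tm by (intro tail_bound) simp
  finally have a: "prob {\<omega> \<in> space M. \<bar>Y \<omega>\<bar> \<le> t} \<le> 2 * exp (-((\<bar>m\<bar> - t)^2)/2)" .
  have b: "prob {\<omega> \<in> space M. t < \<bar>Y \<omega>\<bar>} = 1 - prob {\<omega> \<in> space M. \<bar>Y \<omega>\<bar> \<le> t}"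
    using prob_compl[of "{\<omega> \<in> space M. \<bar>Y \<omega>\<bar> \<le> t}"] Ym
    by (subgoal_tac "space M - {\<omega> \<in> space M. \<bar>Y \<omega>\<bar> \<le> t} = {\<omega> \<in> space M. t < \<bar>Y \<omega>\<bar>}") (auto, measurable)
  have c: "prob {\<omega> \<in> space M. t < \<bar>Y \<omega>\<bar>} \<le> prob {\<omega> \<in> space M. c < \<bar>Y \<omega>\<bar>}"
    using Ym ct by (intro finite_measure_mono) (auto, measurable)
  show ?thesis using a b c by linarith
qed



lemma gap:
  fixes Nr n p1 \<beta> m L' :: real
  assumes N1: "1 \<le> Nr" and n: "0 < n" and Nn: "p1 / 2 < Nr / n" and p1: "0 < p1" and b: "0 < \<beta>"
    and m: "0 < m" and r: "sqrt (2 * ln Nr) / m < L'" and L': "0 < L'" "L' < 1"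
  shows "sqrt (2 * ln Nr) * (1 / L' - 1) - sqrt \<bar>2 * ln (32 / (\<beta> * p1))\<bar>
         \<le> m - sqrt (2 * ln (16 * n / \<beta>))"
proof -
  define s where "s = sqrt (2 * ln Nr)"
  define K where "K = 32 / (\<beta> * p1)"
  have lnN: "0 \<le> ln Nr" using N1 by simp
  have s0: "0 \<le> s" unfolding s_def using lnN by simp
  have s2: "s^2 = 2 * ln Nr" unfolding s_def using lnN by simp
  have K0: "0 < K" unfolding K_def using b p1 by simp
  have "p1 * n < 2 * Nr" using Nn n by (simp add: field_simps)
  then have "16 * n / \<beta> \<le> K * Nr" unfolding K_def using b p1 n by (simp add: field_simps)
  then have "ln (16 * n / \<beta>) \<le> ln (K * Nr)" using n b by (intro ln_mono) auto
  also have "\<dots> = ln K + ln Nr" using K0 N1 by (simp add: ln_mult)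
  finally have "2 * ln (16 * n / \<beta>) \<le> \<bar>2 * ln K\<bar> + s^2" using s2 by linarith
  then have "sqrt (2 * ln (16 * n / \<beta>)) \<le> sqrt (\<bar>2 * ln K\<bar> + s^2)" by (rule real_sqrt_le_mono)
  also have "\<dots> \<le> sqrt \<bar>2 * ln K\<bar> + sqrt (s^2)" by (rule sqrt_add_le_add_sqrt) auto
  also have "sqrt (s^2) = s" using s0 by simp
  finally have t: "sqrt (2 * ln (16 * n / \<beta>)) \<le> sqrt \<bar>2 * ln K\<bar> + s" .
  have "s < L' * m" using r m unfolding s_def[symmetric] by (simp add: pos_divide_less_eq mult.commute)
  then have "s / L' < m" using L' by (simp add: pos_divide_less_eq mult.commute)
  then have "s * (1 / L' - 1) < m - s" by (simp add: algebra_simps)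
  then show ?thesis using t unfolding s_def[symmetric] K_def[symmetric] by linarith
qed

lemma asym1:
  assumes "0 < k"
  shows "filterlim (\<lambda>x::real. sqrt (2 * ln x) * k - C) at_top at_top"
  using assms by real_asymp

lemma asym2: "((\<lambda>x::real. 1 - 2 * exp (-(x^2)/2)) \<longlongrightarrow> 1) at_top"
  by real_asymp

lemma step:
  fixes M :: "'a measure" and X :: "nat \<Rightarrow> 'a \<Rightarrow> real"
  assumes P: "prob_space M" and jg: "jointly_gaussian M X mu rho n" and rd: "\<And>i. rho i i = 1"
    and I: "finite I" "I \<subseteq> {1..n}" and i0: "i0 \<in> I"
    and ct: "c \<le> t" and g: "0 \<le> g" "g \<le> \<bar>mu i0\<bar> - t"
  shows "1 - 2 * exp (-(g^2)/2) \<le> AnyPwr M X I c"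
proof -
  interpret prob_space M by (rule P)
  have i0n: "i0 \<in> {1..n}" using I i0 by auto
  have D: "distributed M lborel (X i0) (\<lambda>x. ennreal (normal_density (mu i0) 1 x))"
    using marginal(1)[OF jg i0n rd] .
  have meas: "X i \<in> borel_measurable M" if "i \<in> I" for i
    using marginal(2)[OF jg _ rd] that I by auto
  have "1 - 2 * exp (-((\<bar>mu i0\<bar> - t)^2)/2) \<le> prob {\<omega> \<in> space M. c < \<bar>X i0 \<omega>\<bar>}"
    using g by (intro power_bound[OF P D ct]) auto
  moreover have "g^2 \<le> (\<bar>mu i0\<bar> - t)^2" using g by (intro power_mono) auto
  then have "exp (-((\<bar>mu i0\<bar> - t)^2)/2) \<le> exp (-(g^2)/2)" by simp
  moreover have "prob {\<omega> \<in> space M. c < \<bar>X i0 \<omega>\<bar>} \<le> AnyPwr M X I c"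
  proof -
    have eq: "{\<omega> \<in> space M. \<exists>i\<in>I. c < \<bar>X i \<omega>\<bar>} = (\<Union>i\<in>I. {\<omega> \<in> space M. c < \<bar>X i \<omega>\<bar>})" by auto
    have "(\<Union>i\<in>I. {\<omega> \<in> space M. c < \<bar>X i \<omega>\<bar>}) \<in> sets M"
    proof (rule sets.finite_UN[OF I(1)])
      fix i assume "i \<in> I"
      then have [measurable]: "X i \<in> borel_measurable M" by (rule meas)
      show "{\<omega> \<in> space M. c < \<bar>X i \<omega>\<bar>} \<in> sets M" by measurable
    qed
    then show ?thesis unfolding AnyPwr_def eq using i0
      by (intro finite_measure_mono) auto
  qed
  ultimately show ?thesis by linarith
qed

theorem theorem5p3:
  fixes \<alpha> p1 L :: real
    and rho :: "nat \<Rightarrow> nat \<Rightarrow> real"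
    and M :: "nat \<Rightarrow> 'a measure"
    and X :: "nat \<Rightarrow> nat \<Rightarrow> 'a \<Rightarrow> real"
    and mu :: "nat \<Rightarrow> nat \<Rightarrow> real"
  assumes alpha: "0 < \<alpha>" "\<alpha> < 1"
    and rho_sym: "\<And>i j. rho i j = rho j i"
    and rho_diag: "\<And>i. rho i i = 1"
    and rho_off: "\<And>i j. i \<noteq> j \<Longrightarrow> \<bar>rho i j\<bar> < 1"
    and rho_psd: "\<And>n (a :: nat \<Rightarrow> real). 0 \<le> (\<Sum>i=1..n. \<Sum>j=1..n. a i * a j * rho i j)"
    and weak_dep1: "(SUP m\<in>{1..}. rho_lag rho m) < 1"
    and weak_dep2: "rho_lag rho \<in> o(\<lambda>m. 1 / ln (real m))"
    and prob: "\<And>n. prob_space (M n)"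
    and gauss: "\<And>n. jointly_gaussian (M n) (X n) (mu n) rho n"
    and n1_inf: "filterlim (\<lambda>n. card (I1 (mu n) n)) at_top sequentially"
    and n1_frac: "(\<lambda>n. real (card (I1 (mu n) n)) / real n) \<longlonglongrightarrow> p1"
    and p1: "0 < p1" "p1 \<le> 1"
    and mu_lim: "(\<lambda>n. sqrt (2 * ln (real (card (I1 (mu n) n))))
                     / Max ((\<lambda>i. \<bar>mu n i\<bar>) ` I1 (mu n) n)) \<longlonglongrightarrow> L"
    and L: "L < 1"
  shows "((\<lambda>n. AnyPwr (M n) (X n) (I1 (mu n) n) (c_Bon (2 * real n) \<alpha>)) \<longlonglongrightarrow> 1) \<and>
         ((\<lambda>n. AnyPwr (M n) (X n) (I1 (mu n) n) (c_Sid (2 * real n) \<alpha>)) \<longlonglongrightarrow> 1)"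
proof -
  define N where "N n = card (I1 (mu n) n)" for n
  define m where "m n = Max ((\<lambda>i. \<bar>mu n i\<bar>) ` I1 (mu n) n)" for n
  define \<beta> where "\<beta> = - ln (1 - \<alpha>)"
  define L' where "L' = (1 + max L 0) / 2"
  define C where "C = sqrt \<bar>2 * ln (32 / (\<beta> * p1))\<bar>"
  define k where "k = 1 / L' - 1"
  define g where "g n = sqrt (2 * ln (real (N n))) * k - C" for n
  have b: "0 < \<beta>" unfolding \<beta>_def using alpha by simp
  have L': "0 < L'" "L' < 1" "L < L'" unfolding L'_def using L by auto
  have k: "0 < k" unfolding k_def using L' by (simp add: field_simps)
  have Nr: "filterlim (\<lambda>n. real (N n)) at_top sequentially"
    unfolding N_def by (rule filterlim_compose[OF filterlim_real_sequentially n1_inf])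
  have gt: "filterlim g at_top sequentially"
    unfolding g_def by (rule filterlim_compose[OF asym1[OF k] Nr])
  have hl: "(\<lambda>n. 1 - 2 * exp (-((g n)^2)/2)) \<longlonglongrightarrow> 1"
    by (rule filterlim_compose[OF asym2 gt])
  have ev1: "eventually (\<lambda>n. 1 \<le> N n) sequentially"
    using n1_inf unfolding N_def filterlim_at_top by auto
  have ev2: "eventually (\<lambda>n. p1 / 2 < real (N n) / real n) sequentially"
  proof -
    have "p1 / 2 < p1" using p1 by simp
    from order_tendstoD(1)[OF n1_frac this] show ?thesis unfolding N_def .
  qed
  have ev3: "eventually (\<lambda>n. sqrt (2 * ln (real (N n))) / m n < L') sequentially"
    using order_tendstoD(2)[OF mu_lim L'(3)] unfolding N_def m_def .
  obtain K :: nat where K: "\<beta> < real K" using reals_Archimedean2 by blast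
  have ev4: "eventually (\<lambda>n. \<beta> < 2 * real n) sequentially"
  proof (rule eventually_mono[OF eventually_ge_at_top[of "K + 1"]])
    fix n assume "K + 1 \<le> n"
    then have "real K \<le> real n" by simp
    then show "\<beta> < 2 * real n" using K b by linarith
  qed
  have ev5: "eventually (\<lambda>n. 0 \<le> g n) sequentially"
    using gt unfolding filterlim_at_top by auto
  have key: "eventually (\<lambda>n. \<forall>c. c \<le> sqrt (2 * ln (16 * real n / \<beta>)) \<longrightarrow>
      1 - 2 * exp (-((g n)^2)/2) \<le> AnyPwr (M n) (X n) (I1 (mu n) n) c) sequentially"
    using ev1 ev2 ev3 ev4 ev5
  proof eventually_elim
    case (elim n)
    define I where "I = I1 (mu n) n"
    have Isub: "I \<subseteq> {1..n}" unfolding I_def I1_def by auto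
    then have If: "finite I" by (rule finite_subset) simp
    have Ine: "I \<noteq> {}" using elim(1) unfolding N_def I_def[symmetric] by auto
    have "card I \<le> n" using card_mono[OF _ Isub] by simp
    then have n0: "0 < real n" using elim(1) unfolding N_def I_def[symmetric] by simp
    have "m n \<in> (\<lambda>i. \<bar>mu n i\<bar>) ` I"
      unfolding m_def I_def[symmetric] using If Ine by (intro Max_in) auto
    then obtain i0 where i0: "i0 \<in> I" "\<bar>mu n i0\<bar> = m n" by auto
    have m0: "0 < m n" using i0 unfolding I_def I1_def by auto
    have gp: "g n \<le> m n - sqrt (2 * ln (16 * real n / \<beta>))"
      unfolding g_def k_def C_def
      using gap[of "real (N n)" "real n" p1 \<beta> "m n" L'] elim n0 p1 b m0 L' by simp
    show ?case
    proof (intro allI impI)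
      fix c assume c: "c \<le> sqrt (2 * ln (16 * real n / \<beta>))"
      show "1 - 2 * exp (-((g n)^2)/2) \<le> AnyPwr (M n) (X n) (I1 (mu n) n) c"
        unfolding I_def[symmetric]
        using step[OF prob gauss rho_diag If Isub i0(1) c elim(5)] gp i0(2) by simp
    qed
  qed
  have le1: "AnyPwr (M n) (X n) I c \<le> 1" for n I c
    unfolding AnyPwr_def using prob_space.prob_le_1[OF prob] by blast
  have ev4': "eventually (\<lambda>n. - ln (1 - \<alpha>) < 2 * real n) sequentially"
    using ev4 unfolding \<beta>_def .
  show ?thesis
  proof
    show "(\<lambda>n. AnyPwr (M n) (X n) (I1 (mu n) n) (c_Bon (2 * real n) \<alpha>)) \<longlonglongrightarrow> 1"
    proof (rule tendsto_sandwich[OF _ _ hl tendsto_const])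
      show "eventually (\<lambda>n. 1 - 2 * exp (-((g n)^2)/2) \<le> AnyPwr (M n) (X n) (I1 (mu n) n) (c_Bon (2 * real n) \<alpha>)) sequentially"
        using key ev4' by eventually_elim (use c_Bon_bound[OF alpha] in \<open>auto simp: \<beta>_def\<close>)
      show "eventually (\<lambda>n. AnyPwr (M n) (X n) (I1 (mu n) n) (c_Bon (2 * real n) \<alpha>) \<le> 1) sequentially"
        using le1 by simp
    qed
    show "(\<lambda>n. AnyPwr (M n) (X n) (I1 (mu n) n) (c_Sid (2 * real n) \<alpha>)) \<longlonglongrightarrow> 1"
    proof (rule tendsto_sandwich[OF _ _ hl tendsto_const])
      show "eventually (\<lambda>n. 1 - 2 * exp (-((g n)^2)/2) \<le> AnyPwr (M n) (X n) (I1 (mu n) n) (c_Sid (2 * real n) \<alpha>)) sequentially"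
        using key ev4' by eventually_elim (use c_Sid_bound[OF alpha] in \<open>auto simp: \<beta>_def\<close>)
      show "eventually (\<lambda>n. AnyPwr (M n) (X n) (I1 (mu n) n) (c_Sid (2 * real n) \<alpha>) \<le> 1) sequentially"
        using le1 by simp
    qed
  qed
qed

end
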